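(* Let $\alpha\ge1$, $\beta,\gamma\ge0$ be integers and let $(\mathbf a,\mathbf b)$ be a binary GCP of length $N=2^\alpha10^\beta26^\gamma$ obtained by the recursive Turyn construction $(\mathbf e_0,\mathbf f_0)=K_2$, $(\mathbf e_i,\mathbf f_i)=\mathrm{Turyn}(\mathcal A_i,(\mathbf e_{i-1},\mathbf f_{i-1}))$ with each $\mathcal A_i\in\{K_2,K_{10},K_{26}\}$ (so that in total $K_2$ is used $\alpha$ times, $K_{10}$ $\beta$ times and $K_{26}$ $\gamma$ times). Let $(\mathbf c,\mathbf d)=(\overleftarrow{\mathbf b},-\overleftarrow{\mathbf a})$ be its complementary mate, let $\mathbf e=(\mathbf a\|\mathbf c)$ and $\mathbf f=(\mathbf b\|\mathbf d)$ (length $2N$), and for $x_0,y_0,x_1,y_1\in\mathbb U_q$ let $\mathbf g=(x_0,e_0,\dots,e_{2N-1},y_0)$ and $\mathbf h=(x_1,f_0,\dots,f_{2N-1},y_1)$. If $$x_0-\overline{y_1}=0,\quad x_1+\overline{y_0}=0,\quad x_0=x_1,\quad \overline{y_0}=-\overline{y_1},$$ then $(\mathbf g,\mathbf h)$ is a $(2N+2,\,N/2+1)$-CZCP.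
   Context: $q\ge2$ is an integer and $\mathbb U_q=\{e^{2\pi\sqrt{-1}t/q}:0\le t<q\}$. $\overleftarrow{\mathbf a}$ denotes the reversal of $\mathbf a$; $\|$ denotes concatenation. A binary GCP (Golay complementary pair) of length $N$ is a pair of $\pm1$ sequences with $\rho_{\mathbf a}(\tau)+\rho_{\mathbf b}(\tau)=0$ for all $\tau\neq0$. Kernels (written with $+=1$, $-=-1$; first row $\mathbf a$, second row $\mathbf b$): $K_2=(++,\;+-)$; $K_{10}=(++-+-+--++,\;++-+++++--)$; $K_{26}=(++++-++--+-+-+--+-+++--+++,\;++++-++--+-+++++-+---++---)$. Turyn's method: for binary GCPs $\mathcal A=(\mathbf a,\mathbf b)$ of length $N$ and $\mathcal B=(\mathbf c,\mathbf d)$ of length $M$, $\mathrm{Turyn}(\mathcal A,\mathcal B)=(\mathbf e,\mathbf f)$ of length $MN$ with $\mathbf e=\mathbf c\otimes\frac{\mathbf a+\mathbf b}2-\overleftarrow{\mathbf d}\otimes\frac{\mathbf b-\mathbf a}2$, $\mathbf f=\mathbf d\otimes\frac{\mathbf a+\mathbf b}2+\overleftarrow{\mathbf c}\otimes\frac{\mathbf b-\mathbf a}2$, where $\mathbf u\otimes\mathbf v=(u_0\mathbf v,u_1\mathbf v,\dots)$ is the Kronecker product. Aperiodic correlation: for complex sequences $\mathbf a,\mathbf b$ of length $N$, $\rho_{\mathbf a,\mathbf b}(\tau)=\sum_{k=0}^{N-1-\tau}a_k\overline{b_{k+\tau}}$ for $0\le\tau\le N-1$, $\rho_{\mathbf a,\mathbf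 b}(\tau)=\sum_{k=0}^{N-1+\tau}a_{k-\tau}\overline{b_k}$ for $-(N-1)\le\tau\le-1$, and $0$ for $|\tau|\ge N$; $\rho_{\mathbf a}=\rho_{\mathbf a,\mathbf a}$. CZCP: with $\mathcal T_1=\{1,\dots,Z\}$, $\mathcal T_2=\{N-Z,\dots,N-1\}$, a pair $(\mathbf a,\mathbf b)$ of length-$N$ sequences is an $(N,Z)$-CZCP if $\rho_{\mathbf a}(\tau)+\rho_{\mathbf b}(\tau)=0$ for all $|\tau|\in\mathcal T_1\cup\mathcal T_2$ and $\rho_{\mathbf a,\mathbf b}(\tau)+\rho_{\mathbf b,\mathbf a}(\tau)=0$ for all $|\tau|\in\mathcal T_2$. *)

theory Defs
  imports Complex_Main
begin

type_synonym cseq = "complex list"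

definition roots_U :: "nat \<Rightarrow> complex set" where
  "roots_U q = {cis (2 * pi * real t / real q) | t. t < q}"

text \<open>Aperiodic (cross-)correlation rho_{a,b}(tau), with 0 for |tau| >= N.\<close>
definition acorr :: "cseq \<Rightarrow> cseq \<Rightarrow> int \<Rightarrow> complex" where
  "acorr a b tau =
     (if tau \<ge> 0
      then (\<Sum>k<length a - nat tau. a ! k * cnj (b ! (k + nat tau)))
      else (\<Sum>k<length a - nat (- tau). a ! (k + nat (- tau)) * cnj (b ! k)))"

abbreviation aacorr :: "cseq \<Rightarrow> int \<Rightarrow> complex" where
  "aacorr a \<equiv> acorr a a"

definition CZCP :: "nat \<Rightarrow> nat \<Rightarrow> cseq \<Rightarrow> cseq \<Rightarrow> bool" where
  "CZCP N Z a b \<longleftrightarrow> length a = N \<and> length b = N \<and>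
     (\<forall>tau::int. nat \<bar>tau\<bar> \<in> {1..Z} \<union> {N - Z..N - 1} \<longrightarrow> aacorr a tau + aacorr b tau = 0) \<and>
     (\<forall>tau::int. nat \<bar>tau\<bar> \<in> {N - Z..N - 1} \<longrightarrow> acorr a b tau + acorr b a tau = 0)"

definition half_sum :: "cseq \<Rightarrow> cseq \<Rightarrow> cseq" where
  "half_sum a b = map (\<lambda>(x, y). (x + y) / 2) (zip a b)"

definition half_diff :: "cseq \<Rightarrow> cseq \<Rightarrow> cseq" where
  "half_diff b a = map (\<lambda>(x, y). (x - y) / 2) (zip b a)"

definition vadd :: "cseq \<Rightarrow> cseq \<Rightarrow> cseq" where
  "vadd u v = map (\<lambda>(x, y). x + y) (zip u v)"

definition vsub :: "cseq \<Rightarrow> cseq \<Rightarrow> cseq" where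
  "vsub u v = map (\<lambda>(x, y). x - y) (zip u v)"

definition kron :: "cseq \<Rightarrow> cseq \<Rightarrow> cseq" where
  "kron u v = concat (map (\<lambda>x. map (\<lambda>y. x * y) v) u)"

definition turyn :: "cseq \<times> cseq \<Rightarrow> cseq \<times> cseq \<Rightarrow> cseq \<times> cseq" where
  "turyn A B = (let (a, b) = A; (c, d) = B in
     (vsub (kron c (half_sum a b)) (kron (rev d) (half_diff b a)),
      vadd (kron d (half_sum a b)) (kron (rev c) (half_diff b a))))"

definition K2 :: "cseq \<times> cseq" where
  "K2 = ([1, 1], [1, -1])"

definition K10 :: "cseq \<times> cseq" where
  "K10 = ([1, 1, -1, 1, -1, 1, -1, -1, 1, 1], [1, 1, -1, 1, 1, 1, 1, 1, -1, -1])"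

definition K26 :: "cseq \<times> cseq" where
  "K26 = ([1, 1, 1, 1, -1, 1, 1, -1, -1, 1, -1, 1, -1, 1, -1, -1, 1, -1, 1, 1, 1, -1, -1, 1, 1, 1],
          [1, 1, 1, 1, -1, 1, 1, -1, -1, 1, -1, 1, 1, 1, 1, 1, -1, 1, -1, -1, -1, 1, 1, -1, -1, -1])"

definition turyn_rec :: "(cseq \<times> cseq) list \<Rightarrow> cseq \<times> cseq" where
  "turyn_rec ks = foldl (\<lambda>P A. turyn A P) K2 ks"

end

theory Submission imports Defs "HOL-Computational_Algebra.Polynomial"
begin

lemma pcompose_monom_monom: "pcompose (monom c k) (monom (1::'a::comm_ring_1) n) = monom c (k*n)"
proof (induction k)
  case 0 then show ?case by (simp add: monom_0)
next
  case (Suc k)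
  have "monom c (Suc k) = [:0,1:] * monom c k"
    by (simp add: monom_Suc)
  then have "pcompose (monom c (Suc k)) (monom 1 n) = monom 1 n * monom c (k*n)"
    by (simp add: pcompose_mult Suc pcompose_pCons)
  then show ?case by (simp add: mult_monom add.commute)
qed

lemma kron_Cons: "kron (x#u) v = map (\<lambda>y. x*y) v @ kron u v"
  by (simp add: kron_def)
lemma kron_Nil[simp]: "kron [] v = []" by (simp add: kron_def)
lemma kron_append: "kron (u@w) v = kron u v @ kron w v" by (simp add: kron_def)
lemma length_kron[simp]: "length (kron u v) = length u * length v"
  by (induction u) (auto simp: kron_Cons)
lemma rev_kron: "rev (kron u v) = kron (rev u) (rev v)"
  by (induction u) (auto simp: kron_Cons kron_append rev_map)

lemma Poly_map_mult: "Poly (map (\<lambda>y. x*y) v) = smult x (Poly v)"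
  by (induction v) auto

lemma Poly_kron: "Poly (kron u v) = pcompose (Poly u) (monom 1 (length v)) * Poly v"
  by (induction u) (auto simp: kron_Cons Poly_append Poly_map_mult pcompose_pCons algebra_simps)

lemma Poly_vsub: "length u = length v \<Longrightarrow> Poly (vsub u v) = Poly u - Poly v"
  by (induction u v rule: list_induct2) (auto simp: vsub_def)
lemma Poly_vadd: "length u = length v \<Longrightarrow> Poly (vadd u v) = Poly u + Poly v"
  by (induction u v rule: list_induct2) (auto simp: vadd_def)
lemma Poly_hs: "length u = length v \<Longrightarrow> Poly (half_sum u v) = smult (1/2) (Poly u + Poly v)"
  by (induction u v rule: list_induct2) (auto simp: half_sum_def add_divide_distrib)
lemma Poly_hd: "length u = length v \<Longrightarrow> Poly (half_diff u v) = smult (1/2) (Poly u - Poly v)"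
  by (induction u v rule: list_induct2) (auto simp: half_diff_def diff_divide_distrib)

lemma rev_vsub: "length u = length v \<Longrightarrow> rev (vsub u v) = vsub (rev u) (rev v)"
  by (simp add: vsub_def zip_rev rev_map)
lemma rev_vadd: "length u = length v \<Longrightarrow> rev (vadd u v) = vadd (rev u) (rev v)"
  by (simp add: vadd_def zip_rev rev_map)
lemma rev_hs: "length u = length v \<Longrightarrow> rev (half_sum u v) = half_sum (rev u) (rev v)"
  by (simp add: half_sum_def zip_rev rev_map)
lemma rev_hd: "length u = length v \<Longrightarrow> rev (half_diff u v) = half_diff (rev u) (rev v)"
  by (simp add: half_diff_def zip_rev rev_map)
lemma len_ops[simp]: "length (vsub u v) = min (length u) (length v)"
  "length (vadd u v) = min (length u) (length v)"
  "length (half_sum u v) = min (length u) (length v)"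
  "length (half_diff u v) = min (length u) (length v)"
  by (auto simp: vsub_def vadd_def half_sum_def half_diff_def)

lemma aux_half: fixes h A B Ar Br :: "'a::comm_ring_1" assumes "h*h+h*h = h"
  shows "h*(A+B)*(h*(Ar+Br)) + h*(B-A)*(h*(Br-Ar)) = h*(A*Ar+B*Br)"
proof -
  have "h*(A+B)*(h*(Ar+Br)) + h*(B-A)*(h*(Br-Ar)) = (h*h+h*h)*(A*Ar+B*Br)" by (simp add: algebra_simps)
  then show ?thesis using assms by simp
qed

definition GP :: "cseq \<Rightarrow> cseq \<Rightarrow> bool" where
  "GP a b \<longleftrightarrow> length a = length b \<and> length a \<ge> 1 \<and>
     Poly a * Poly (rev a) + Poly b * Poly (rev b) = monom (2 * of_nat (length a)) (length a - 1)"

lemma length_turyn: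
  assumes "length a = length b" "length c = length d" "turyn (a,b) (c,d) = (e,f)"
  shows "length e = length c * length a" "length f = length c * length a"
  using assms by (auto simp: turyn_def)

lemma GP_turyn:
  assumes "GP a b" "GP c d" "turyn (a,b) (c,d) = (e,f)"
  shows "GP e f"
proof -
  define n where "n = length a"
  define m where "m = length c"
  have ln: "length b = n" "n \<ge> 1" and lm: "length d = m" "m \<ge> 1"
    using assms(1,2) by (auto simp: GP_def n_def m_def)
  define s where "s = half_sum a b"
  define t where "t = half_diff b a"
  have ls: "length s = n" "length t = n" using ln by (auto simp: s_def t_def n_def)
  have e: "e = vsub (kron c s) (kron (rev d) t)" and f: "f = vadd (kron d s) (kron (rev c) t)"
    using assms(3) by (auto simp: turyn_def s_def t_def)
  define W where "W = (monom 1 n :: complex poly)"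
  define A where "A = Poly a"  define B where "B = Poly b"
  define Ar where "Ar = Poly (rev a)"  define Br where "Br = Poly (rev b)"
  define Cw where "Cw = pcompose (Poly c) W"  define Dw where "Dw = pcompose (Poly d) W"
  define Crw where "Crw = pcompose (Poly (rev c)) W"  define Drw where "Drw = pcompose (Poly (rev d)) W"
  have S: "Poly s = smult (1/2) (A + B)" using ln by (simp add: s_def Poly_hs A_def B_def n_def)
  have T: "Poly t = smult (1/2) (B - A)" using ln by (simp add: t_def Poly_hd A_def B_def n_def)
  have Sr: "Poly (rev s) = smult (1/2) (Ar + Br)" using ln
    by (simp add: s_def rev_hs Poly_hs Ar_def Br_def n_def)
  have Tr: "Poly (rev t) = smult (1/2) (Br - Ar)" using ln
    by (simp add: t_def rev_hd Poly_hd Ar_def Br_def n_def)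
  have E: "Poly e = Cw * Poly s - Drw * Poly t"
    using ls lm by (simp add: e Poly_vsub Poly_kron Cw_def Drw_def W_def m_def mult.commute)
  have F: "Poly f = Dw * Poly s + Crw * Poly t"
    using ls lm by (simp add: f Poly_vadd Poly_kron Dw_def Crw_def W_def m_def mult.commute)
  have Er: "Poly (rev e) = Crw * Poly (rev s) - Dw * Poly (rev t)"
    using ls lm by (simp add: e rev_vsub rev_kron Poly_vsub Poly_kron Crw_def Dw_def W_def m_def mult.commute)
  have Fr: "Poly (rev f) = Drw * Poly (rev s) + Cw * Poly (rev t)"
    using ls lm by (simp add: f rev_vadd rev_kron Poly_vadd Poly_kron Drw_def Cw_def W_def m_def mult.commute)
  have gab: "A * Ar + B * Br = monom (2 * of_nat n) (n - 1)"
    using assms(1) by (simp add: GP_def A_def B_def Ar_def Br_def n_def)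
  have gcd: "Cw * Crw + Dw * Drw = monom (2 * of_nat m) ((m - 1) * n)"
  proof -
    have "Cw * Crw + Dw * Drw = pcompose (Poly c * Poly (rev c) + Poly d * Poly (rev d)) W"
      by (simp add: Cw_def Crw_def Dw_def Drw_def pcompose_mult pcompose_add)
    also have "\<dots> = pcompose (monom (2 * of_nat m) (m - 1)) W"
      using assms(2) by (simp add: GP_def m_def)
    finally show ?thesis by (simp add: W_def pcompose_monom_monom)
  qed
  have key: "Poly e * Poly (rev e) + Poly f * Poly (rev f) =
     (Cw * Crw + Dw * Drw) * (Poly s * Poly (rev s) + Poly t * Poly (rev t))"
    unfolding E F Er Fr by (simp add: algebra_simps)
  have st: "Poly s * Poly (rev s) + Poly t * Poly (rev t) = smult (1/2) (A * Ar + B * Br)"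
  proof -
    have h: "\<And>c (p::complex poly). smult c p = [:c:] * p" by simp
    have q: "[:1/2:] * [:1/2:] + [:1/2:] * [:1/2:] = ([:1/2:]::complex poly)"
      by simp
    show ?thesis unfolding S T Sr Tr h
      using aux_half[OF q] by simp
  qed
  have le: "length e = m * n" "length f = m * n"
    using length_turyn[OF _ _ assms(3)] ln lm by (auto simp: n_def m_def)
  have idx: "(m - 1) * n + (n - 1) = m * n - 1" using ln lm
  proof -
    obtain m' where "m = Suc m'" using lm by (cases m) auto
    then show ?thesis using ln by (simp add: algebra_simps)
  qed
  have "Poly e * Poly (rev e) + Poly f * Poly (rev f) = monom (2 * of_nat m) ((m - 1) * n) * smult (1/2) (monom (2 * of_nat n) (n - 1))"
    using key st gcd gab by simp
  also have "\<dots> = monom (2 * of_nat (m*n)) (m * n - 1)"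
    using idx by (simp add: smult_monom mult_monom mult.assoc)
  finally show ?thesis using le ln lm by (simp add: GP_def)
qed
lemma nth_kron: "i < length u * length v \<Longrightarrow> kron u v ! i = u ! (i div length v) * v ! (i mod length v)"
proof (induction u arbitrary: i)
  case Nil then show ?case by (simp add: kron_def)
next
  case (Cons x u)
  show ?case
  proof (cases "i < length v")
    case True then show ?thesis by (simp add: kron_Cons nth_append)
  next
    case False
    then have "i - length v < length u * length v" using Cons.prems by auto
    then have "kron u v ! (i - length v) = u ! ((i - length v) div length v) * v ! ((i - length v) mod length v)"
      using Cons.IH by blast
    moreover have vp: "0 < length v" using Cons.prems by (cases "length v") auto
    moreover have "i div length v = Suc ((i - length v) div length v)"
      using le_div_geq[OF vp] False by simp
    moreover have "(i - length v) mod length v = i mod length v"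
      using False by (simp add: le_mod_geq)
    moreover have "i div length v \<noteq> 0" using False vp by (simp add: div_eq_0_iff)
    ultimately show ?thesis using False
      by (auto simp: kron_Cons nth_append nth_Cons' )
  qed
qed

lemma nth_vsub: "i < length u \<Longrightarrow> i < length v \<Longrightarrow> vsub u v ! i = u!i - v!i" by (simp add: vsub_def)
lemma nth_vadd: "i < length u \<Longrightarrow> i < length v \<Longrightarrow> vadd u v ! i = u!i + v!i" by (simp add: vadd_def)
lemma nth_hs: "i < length u \<Longrightarrow> i < length v \<Longrightarrow> half_sum u v ! i = (u!i + v!i)/2" by (simp add: half_sum_def)
lemma nth_hd: "i < length u \<Longrightarrow> i < length v \<Longrightarrow> half_diff u v ! i = (u!i - v!i)/2" by (simp add: half_diff_def)
definition realL :: "cseq \<Rightarrow> bool" where "realL xs \<longleftrightarrow> (\<forall>i<length xs. cnj (xs!i) = xs!i)"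

definition HS :: "cseq \<Rightarrow> cseq \<Rightarrow> bool" where
  "HS a b \<longleftrightarrow> length a = length b \<and> even (length a) \<and>
     (\<forall>i<length a. a!i = (if i < length a div 2 then b!i else - b!i))"

lemma turyn_nth:
  assumes "length a = length b" "length c = length d" "turyn (a,b) (c,d) = (e,f)"
    and "i < length c * length a"
  defines "k \<equiv> i div length a" and "j \<equiv> i mod length a"
  shows "e ! i = c!k * ((a!j + b!j)/2) - d!(length c - 1 - k) * ((b!j - a!j)/2)"
    "f ! i = d!k * ((a!j + b!j)/2) + c!(length c - 1 - k) * ((b!j - a!j)/2)"
    "k < length c" "j < length a"
proof -
  have la: "0 < length a" using assms(4) by (cases "length a") auto
  show kc: "k < length c" using assms(4) by (simp add: k_def less_mult_imp_div_less)
  show ja: "j < length a" using la by (simp add: j_def)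
  have e: "e = vsub (kron c (half_sum a b)) (kron (rev d) (half_diff b a))"
      and f: "f = vadd (kron d (half_sum a b)) (kron (rev c) (half_diff b a))"
    using assms(3) by (auto simp: turyn_def)
  show "e ! i = c!k * ((a!j + b!j)/2) - d!(length c - 1 - k) * ((b!j - a!j)/2)"
    using assms(1,2,4) kc ja unfolding e k_def j_def
    by (simp add: nth_vsub nth_kron nth_hs nth_hd rev_nth)
  show "f ! i = d!k * ((a!j + b!j)/2) + c!(length c - 1 - k) * ((b!j - a!j)/2)"
    using assms(1,2,4) kc ja unfolding f k_def j_def
    by (simp add: nth_vadd nth_kron nth_hs nth_hd rev_nth)
qed

lemma HS_turyn:
  assumes "length a = length b" "length a \<ge> 1" "HS c d" "turyn (a,b) (c,d) = (e,f)"
  shows "HS e f"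
proof -
  define m where "m = length c"
  define n where "n = length a"
  have hc: "length d = m" "even m" "\<And>i. i < m \<Longrightarrow> c!i = (if i < m div 2 then d!i else - d!i)"
    using assms(3) by (auto simp: HS_def m_def)
  have le: "length e = m * n" "length f = m * n"
    using assms(1,4) hc(1) by (auto simp: turyn_def m_def n_def)
  have half: "(m*n) div 2 = (m div 2) * n" using hc(2) by auto
  have "\<forall>i<m*n. e!i = (if i < (m*n) div 2 then f!i else - f!i)"
  proof (intro allI impI)
    fix i assume i: "i < m * n"
    define k where "k = i div n"
    define j where "j = i mod n"
    have T: "e ! i = c!k * ((a!j + b!j)/2) - d!(m - 1 - k) * ((b!j - a!j)/2)"
      "f ! i = d!k * ((a!j + b!j)/2) + c!(m - 1 - k) * ((b!j - a!j)/2)" "k < m"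
      using turyn_nth[OF assms(1) _ assms(4), of i] hc(1) i
      by (auto simp: m_def n_def k_def j_def)
    have np: "0 < n" using assms(2) by (simp add: n_def less_eq_Suc_le)
    have iff: "i < (m div 2) * n \<longleftrightarrow> k < m div 2"
      using np by (simp add: k_def div_less_iff_less_mult)
    show "e!i = (if i < (m*n) div 2 then f!i else - f!i)"
    proof (cases "k < m div 2")
      case True
      then have "m - 1 - k < m" "\<not> m - 1 - k < m div 2" using hc(2) T(3) by auto
      then have q: "c!k = d!k" "c!(m-1-k) = - d!(m-1-k)" using True T(3) hc(3)[of k] hc(3)[of "m-1-k"] by auto
      have "e!i = f!i" unfolding T(1) T(2) q by simp
      then show ?thesis using True iff half by (simp add: mult.commute)
    next
      case False
      then have "m - 1 - k < m" "m - 1 - k < m div 2" using hc(2) T(3) by auto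
      then have q: "c!k = - d!k" "c!(m-1-k) = d!(m-1-k)" using False T(3) hc(3)[of k] hc(3)[of "m-1-k"] by auto
      have "e!i = - f!i" unfolding T(1) T(2) q by simp
      then show ?thesis using False iff half by (simp add: mult.commute)
    qed
  qed
  then show ?thesis using le hc(2) by (simp add: HS_def)
qed

lemma realL_turyn:
  assumes "length a = length b" "length c = length d" "realL a" "realL b" "realL c" "realL d"
    "turyn (a,b) (c,d) = (e,f)"
  shows "realL e" "realL f"
proof -
  have le: "length e = length c * length a" "length f = length c * length a"
    using assms(1,2,7) by (auto simp: turyn_def)
  have ra: "\<And>i. i < length a \<Longrightarrow> cnj (a!i) = a!i" "\<And>i. i < length a \<Longrightarrow> cnj (b!i) = b!i"
    "\<And>i. i < length c \<Longrightarrow> cnj (c!i) = c!i" "\<And>i. i < length c \<Longrightarrow> cnj (d!i) = d!i"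
    using assms(1-6) by (auto simp: realL_def)
  show "realL e" unfolding realL_def
  proof (intro allI impI)
    fix i assume i: "i < length e"
    note T = turyn_nth[OF assms(1,2,7), of i]
    have "length c - 1 - i div length a < length c" using T(3) i le by auto
    then show "cnj (e!i) = e!i" using T i le ra[of "i div length a"] ra[of "i mod length a"]
      ra[of "length c - 1 - i div length a"] by simp
  qed
  show "realL f" unfolding realL_def
  proof (intro allI impI)
    fix i assume i: "i < length f"
    note T = turyn_nth[OF assms(1,2,7), of i]
    have "length c - 1 - i div length a < length c" using T(3) i le by auto
    then show "cnj (f!i) = f!i" using T i le ra[of "i div length a"] ra[of "i mod length a"]
      ra[of "length c - 1 - i div length a"] by simp
  qed
qed


definition KP :: "cseq \<times> cseq \<Rightarrow> bool" where
  "KP A \<longleftrightarrow> GP (fst A) (snd A) \<and> realL (fst A) \<and> realL (snd A)"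

lemma KP_K2: "KP K2" by (simp add: KP_def GP_def realL_def K2_def monom_Suc monom_0 less_Suc_eq)
lemma KP_K10: "KP K10" by (simp add: KP_def GP_def realL_def K10_def monom_Suc monom_0 less_Suc_eq)
lemma KP_K26: "KP K26" by (simp add: KP_def GP_def realL_def K26_def monom_Suc monom_0 less_Suc_eq)
lemma HS_K2: "HS (fst K2) (snd K2)" by (simp add: HS_def K2_def less_Suc_eq)

lemma turyn_rec_snoc: "turyn_rec (ks @ [A]) = turyn A (turyn_rec ks)"
  by (simp add: turyn_rec_def)

lemma turyn_rec_inv:
  assumes "\<forall>A\<in>set ks. KP A"
  shows "GP (fst (turyn_rec ks)) (snd (turyn_rec ks)) \<and> realL (fst (turyn_rec ks)) \<and>
    realL (snd (turyn_rec ks)) \<and> HS (fst (turyn_rec ks)) (snd (turyn_rec ks)) \<and>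
    length (fst (turyn_rec ks)) = 2 * prod_list (map (\<lambda>A. length (fst A)) ks)"
  using assms
proof (induction ks rule: rev_induct)
  case Nil
  then show ?case using KP_K2 HS_K2 by (simp add: turyn_rec_def KP_def K2_def)
next
  case (snoc A ks)
  obtain a b where ab: "A = (a,b)" by (cases A)
  obtain c d where cd: "turyn_rec ks = (c,d)" by (cases "turyn_rec ks")
  obtain e f where ef: "turyn (a,b) (c,d) = (e,f)" by (cases "turyn (a,b) (c,d)")
  have IH: "GP c d" "realL c" "realL d" "HS c d" "length c = 2 * prod_list (map (\<lambda>A. length (fst A)) ks)"
    using snoc by (auto simp: cd)
  have kA: "GP a b" "realL a" "realL b" using snoc.prems ab by (auto simp: KP_def)
  have la: "length a = length b" "length a \<ge> 1" using kA by (auto simp: GP_def)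
  have lc: "length c = length d" using IH by (auto simp: GP_def)
  have "GP e f" using GP_turyn[OF kA(1) IH(1) ef] .
  moreover have "realL e" "realL f" using realL_turyn[OF la(1) lc kA(2,3) IH(2,3) ef] by auto
  moreover have "HS e f" using HS_turyn[OF la IH(4) ef] .
  moreover have "length e = length c * length a" using ef la lc by (auto simp: turyn_def)
  ultimately show ?case using IH(5) by (simp add: turyn_rec_snoc cd ab ef)
qed

lemma prod_count:
  assumes "set ks \<subseteq> {K2, K10, K26}"
  shows "prod_list (map (\<lambda>A. length (fst A)) ks) = 2 ^ count_list ks K2 * 10 ^ count_list ks K10 * 26 ^ count_list ks K26"
  using assms
proof (induction ks)
  case Nil then show ?case by simp
next
  case (Cons A ks)
  have d: "K2 \<noteq> K10" "K2 \<noteq> K26" "K10 \<noteq> K26" by (auto simp: K2_def K10_def K26_def)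
  have l: "length (fst K2) = 2" "length (fst K10) = 10" "length (fst K26) = 26"
    by (auto simp: K2_def K10_def K26_def)
  from Cons show ?case using d l by (auto simp: d[symmetric])
qed
lemma acorr_coeff:
  assumes "length u = L" "length v = L" "t < L"
  shows "acorr u v (int t) = coeff (Poly u * Poly (rev (map cnj v))) (L - 1 - t)"
proof -
  have "acorr u v (int t) = (\<Sum>k<L - t. u!k * cnj (v!(k+t)))" using assms by (simp add: acorr_def)
  also have "\<dots> = (\<Sum>i\<le>L-1-t. coeff (Poly u) i * coeff (Poly (rev (map cnj v))) (L-1-t-i))"
  proof -
    have s: "{..<L-t} = {..L-1-t}" using assms(3) by auto
    have "\<And>i. i \<le> L-1-t \<Longrightarrow> coeff (Poly u) i * coeff (Poly (rev (map cnj v))) (L-1-t-i) = u!i * cnj (v!(i+t))"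
    proof -
      fix i assume i: "i \<le> L-1-t"
      have "L - 1 - (L-1-t-i) = i + t" using i assms(3) by auto
      then show "coeff (Poly u) i * coeff (Poly (rev (map cnj v))) (L-1-t-i) = u!i * cnj (v!(i+t))"
        using i assms by (simp add: nth_default_def rev_nth add.commute)
    qed
    then show ?thesis unfolding s by (auto intro!: sum.cong)
  qed
  also have "\<dots> = coeff (Poly u * Poly (rev (map cnj v))) (L - 1 - t)" by (simp only: coeff_mult)
  finally show ?thesis .
qed

lemma acorr_neg:
  assumes "length u = length v"
  shows "acorr u v (- int t) = cnj (acorr v u (int t))"
proof (cases "t = 0")
  case True then show ?thesis using assms by (simp add: acorr_def mult.commute)
next
  case False then show ?thesis using assms by (simp add: acorr_def mult.commute)
qed

lemma Poly3: "Poly (p # xs @ [q::complex]) = [:p:] + monom 1 1 * Poly xs + monom q (Suc (length xs))"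
proof -
  have "p # xs @ [q] = [p] @ (xs @ [q])" by simp
  then have "Poly (p # xs @ [q]) = Poly [p] + monom 1 (length [p]) * (Poly xs + monom q (length xs))"
    by (simp only: Poly_append[of "[p]"] Poly_snoc)
  also have "\<dots> = [:p:] + monom 1 1 * Poly xs + monom q (Suc (length xs))"
    by (simp add: distrib_left mult_monom)
  finally show ?thesis .
qed

lemma coeff_low:
  assumes "n < k"
  shows "coeff ((p + monom (c::complex) k) * (r + monom d k)) n = coeff (p*r) n"
proof -
  have m: "monom c k = monom 1 k * [:c:]" "monom d k = monom 1 k * [:d:]"
    by (simp_all add: monom_0[symmetric] mult_monom)
  have "(p + monom c k) * (r + monom d k) = p*r + monom 1 k * ([:c:]*r + [:d:]*p + monom 1 k*[:c:]*[:d:])"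
    unfolding m by (simp add: algebra_simps)
  then show ?thesis using assms by (simp add: coeff_monom_mult)
qed

lemma id_auto: fixes u X W A B Ar Br :: "'a::comm_ring_1"
  shows "(u + X*(A + W*Br)) * (-u + X*(B + W*Ar)) + (u + X*(B - W*Ar))*(u + X*(-A + W*Br))
     = X*(u*((B - A) + (B - A))) + (X*X*W)*((A*Ar + B*Br) + (A*Ar+B*Br))"
  by (simp add: algebra_simps)

lemma id_cross: fixes u X W A B Ar Br :: "'a::comm_ring_1"
  shows "(u + X*(A + W*Br)) * (u + X*(-A + W*Br)) + (u + X*(B - W*Ar))*(-u + X*(B + W*Ar))
     = (X*W)*(u*((Br+Ar)+(Br+Ar))) + (X*X)*(B*B - A*A) + (X*X*W*W)*(Br*Br - Ar*Ar)"
  by (simp add: algebra_simps)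

lemma Poly_uminus: "Poly (map uminus xs) = - Poly xs"
  by (induction xs) auto

lemma realL_map: "realL xs \<Longrightarrow> map cnj xs = xs"
  by (intro nth_equalityI) (auto simp: realL_def)

theorem theorem2:
  fixes q \<alpha> \<beta> \<gamma> N :: nat and ks :: "(cseq \<times> cseq) list"
    and a b c d e f g h :: cseq and x0 y0 x1 y1 :: complex
  assumes "q \<ge> 2"
    and "\<alpha> \<ge> 1"
    and "set ks \<subseteq> {K2, K10, K26}"
    and "count_list ks K2 + 1 = \<alpha>" and "count_list ks K10 = \<beta>" and "count_list ks K26 = \<gamma>"
    and "N = 2 ^ \<alpha> * 10 ^ \<beta> * 26 ^ \<gamma>"
    and "(a, b) = turyn_rec ks"
    and "c = rev b" and "d = map uminus (rev a)"
    and "e = a @ c" and "f = b @ d"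
    and "x0 \<in> roots_U q" and "y0 \<in> roots_U q" and "x1 \<in> roots_U q" and "y1 \<in> roots_U q"
    and "g = [x0] @ e @ [y0]" and "h = [x1] @ f @ [y1]"
    and "x0 - cnj y1 = 0" and "x1 + cnj y0 = 0" and "x0 = x1" and "cnj y0 = - cnj y1"
  shows "CZCP (2 * N + 2) (N div 2 + 1) g h"
proof -
  have kp: "\<forall>A\<in>set ks. KP A" using assms(3) KP_K2 KP_K10 KP_K26 by blast
  note inv = turyn_rec_inv[OF kp]
  have ab: "turyn_rec ks = (a,b)" using assms(8) by simp
  have gp: "GP a b" and ra: "realL a" and rb: "realL b" and hs: "HS a b"
    and la: "length a = 2 * prod_list (map (\<lambda>A. length (fst A)) ks)"
    using inv unfolding ab by auto
  have lN: "length a = N" using la prod_count[OF assms(3)] assms(4-7)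
    by (simp add: assms(4)[symmetric])
  have lb: "length b = N" using gp lN by (simp add: GP_def)
  have N2: "N \<ge> 2" "even N" using gp hs lN by (auto simp: GP_def HS_def)
  have hsn: "\<And>i. i < N \<Longrightarrow> a!i = (if i < N div 2 then b!i else - b!i)"
    using hs lN by (auto simp: HS_def)
  have y1: "y1 = cnj x0" using assms(19) by (metis complex_cnj_cnj eq_iff_diff_eq_0)
  have y0: "y0 = - cnj x0" using assms(20,21)
    by (metis add_eq_0_iff complex_cnj_cnj complex_cnj_minus)
  have x1: "x1 = x0" using assms(21) by simp
  have mcnj: "map cnj a = a" "map cnj b = b" using realL_map ra rb by auto
  have me: "map cnj e = e" using mcnj by (simp add: assms(11,9) rev_map[symmetric])
  have mf: "map cnj f = f"
  proof -
    have "map cnj f = map cnj b @ map uminus (rev (map cnj a))"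
      by (simp add: assms(12,10) rev_map)
    then show ?thesis using mcnj by (simp add: assms(12,10))
  qed
  define X where "X = (monom 1 1 :: complex poly)"
  define W where "W = (monom 1 N :: complex poly)"
  define A where "A = Poly a"  define B where "B = Poly b"
  define Ar where "Ar = Poly (rev a)"  define Br where "Br = Poly (rev b)"
  define u where "u = [:x0:]"
  define K where "K = Suc (2*N)"
  have le: "length e = 2*N" "length f = 2*N"
    using lN lb by (simp_all add: assms(9-12))
  have lg: "length g = 2*N+2" "length h = 2*N+2" using le by (simp_all add: assms(17,18))
  have PE: "Poly e = A + W*Br" by (simp add: assms(11,9) Poly_append A_def W_def Br_def lN)
  have PEr: "Poly (rev e) = B + W*Ar" by (simp add: assms(11,9) Poly_append B_def W_def Ar_def lb)
  have PF: "Poly f = B - W*Ar"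
    by (simp add: assms(12,10) Poly_append B_def W_def Ar_def lb Poly_uminus)
  have PFr: "Poly (rev f) = -A + W*Br"
    by (simp add: assms(12,10) Poly_append A_def W_def Br_def lN Poly_uminus rev_map)
  have Pg: "Poly g = (u + X*(A + W*Br)) + monom y0 K"
    using Poly3[of x0 e y0] le by (simp add: assms(17) PE u_def X_def K_def)
  have Rg: "Poly (rev (map cnj g)) = (-u + X*(B + W*Ar)) + monom (cnj x0) K"
    using Poly3[of "cnj y0" "rev e" "cnj x0"] le by (simp add: assms(17) PEr u_def X_def K_def rev_map[symmetric] me y0)
  have Ph: "Poly h = (u + X*(B - W*Ar)) + monom y1 K"
    using Poly3[of x1 f y1] le by (simp add: assms(18) PF u_def X_def K_def x1)
  have Rh: "Poly (rev (map cnj h)) = (u + X*(-A + W*Br)) + monom (cnj x1) K"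
    using Poly3[of "cnj y1" "rev f" "cnj x1"] le by (simp add: assms(18) PFr u_def X_def K_def rev_map[symmetric] mf y1)
  have gab: "A * Ar + B * Br = monom (2 * of_nat N) (N - 1)"
    using gp lN by (simp add: GP_def A_def B_def Ar_def Br_def)
  have zBA: "\<And>j. j < N div 2 \<or> N \<le> j \<Longrightarrow> coeff B j = coeff A j"
  proof -
    fix j assume j: "j < N div 2 \<or> N \<le> j"
    then show "coeff B j = coeff A j"
    proof
      assume "j < N div 2" then show ?thesis using hsn[of j] lN lb by (simp add: A_def B_def nth_default_def)
    next
      assume "N \<le> j" then show ?thesis using lN lb by (simp add: A_def B_def nth_default_def)
    qed
  qed
  have XXW: "X*X*W = monom 1 (N+2)" "X*W = monom 1 (N+1)" "X*X = monom 1 2" "X*X*W*W = monom 1 (2*N+2)"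
    by (simp_all add: X_def W_def mult_monom numeral_2_eq_2 mult_2)
  have autoC: "\<And>n. n < K \<Longrightarrow> coeff (Poly g * Poly (rev (map cnj g))) n + coeff (Poly h * Poly (rev (map cnj h))) n
     = (if n < 1 then 0 else x0 * (coeff (B - A) (n-1) + coeff (B - A) (n-1)))"
  proof -
    fix n assume n: "n < K"
    have "coeff (Poly g * Poly (rev (map cnj g))) n + coeff (Poly h * Poly (rev (map cnj h))) n
       = coeff (X*(u*((B - A) + (B - A))) + (X*X*W)*((A*Ar + B*Br) + (A*Ar+B*Br))) n"
      unfolding Pg Rg Ph Rh coeff_low[OF n] coeff_add[symmetric] id_auto ..
    also have "\<dots> = (if n < 1 then 0 else x0 * (coeff (B - A) (n-1) + coeff (B - A) (n-1)))"
    proof -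
      have t2: "coeff ((X*X*W)*((A*Ar + B*Br) + (A*Ar+B*Br))) n = 0"
      proof -
        have "n < N+2 \<or> N - 1 \<noteq> n - (N+2)" using n N2 by (auto simp: K_def)
        then show ?thesis unfolding XXW(1) gab
          by (simp only: coeff_monom_mult coeff_add coeff_monom) auto
      qed
      have cm: "\<And>p m. coeff ([:x0:]*p) m = x0 * coeff p m" by simp
      have t1: "coeff (X*(u*((B - A) + (B - A)))) n = (if n < 1 then 0 else x0 * (coeff (B - A) (n-1) + coeff (B - A) (n-1)))"
        by (simp only: X_def u_def coeff_monom_mult coeff_add cm mult_1)
      show ?thesis by (simp only: coeff_add t1 t2) simp
    qed
    finally show "coeff (Poly g * Poly (rev (map cnj g))) n + coeff (Poly h * Poly (rev (map cnj h))) n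
     = (if n < 1 then 0 else x0 * (coeff (B - A) (n-1) + coeff (B - A) (n-1)))" .
  qed
  have crossC: "\<And>n. n < K \<Longrightarrow> n \<le> N div 2 \<Longrightarrow> coeff (Poly g * Poly (rev (map cnj h))) n + coeff (Poly h * Poly (rev (map cnj g))) n = 0"
  proof -
    fix n assume n: "n < K" and n2: "n \<le> N div 2"
    have "coeff (Poly g * Poly (rev (map cnj h))) n + coeff (Poly h * Poly (rev (map cnj g))) n
       = coeff ((X*W)*(u*((Br+Ar)+(Br+Ar))) + (X*X)*(B*B - A*A) + (X*X*W*W)*(Br*Br - Ar*Ar)) n"
      unfolding Pg Rg Ph Rh coeff_low[OF n] coeff_add[symmetric] id_cross ..
    also have "\<dots> = (if n < 2 then 0 else coeff (B*B - A*A) (n-2))"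
    proof -
      have t1: "coeff ((X*W)*(u*((Br+Ar)+(Br+Ar)))) n = 0"
        unfolding XXW(2) using n2 N2 by (simp add: coeff_monom_mult)
      have t3: "coeff ((X*X*W*W)*(Br*Br - Ar*Ar)) n = 0"
      proof -
        have "n < 2*N+2" using n2 div_le_dividend[of N 2] by linarith
        then show ?thesis unfolding XXW(4) by (simp add: coeff_monom_mult)
      qed
      have t2: "coeff ((X*X)*(B*B - A*A)) n = (if n < 2 then 0 else coeff (B*B - A*A) (n-2))"
        unfolding XXW(3) by (simp add: coeff_monom_mult)
      show ?thesis by (simp only: coeff_add t1 t2 t3) simp
    qed
    also have "\<dots> = 0"
    proof (cases "n < 2")
      case False
      have "coeff (B*B) (n-2) = coeff (A*A) (n-2)"
        unfolding coeff_mult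
      proof (rule sum.cong)
        fix i assume "i \<in> {..n-2}"
        then have "i < N div 2" "n - 2 - i < N div 2" using n2 False by auto
        then show "coeff B i * coeff B (n - 2 - i) = coeff A i * coeff A (n - 2 - i)"
          using zBA by simp
      qed simp
      then show ?thesis by simp
    qed simp
    finally show "coeff (Poly g * Poly (rev (map cnj h))) n + coeff (Poly h * Poly (rev (map cnj g))) n = 0" .
  qed
  define L where "L = 2*N+2"
  define Z where "Z = N div 2 + 1"
  have autoP: "\<And>t. 1 \<le> t \<Longrightarrow> t < L \<Longrightarrow> t \<le> Z \<or> L - Z \<le> t \<Longrightarrow> aacorr g (int t) + aacorr h (int t) = 0"
  proof -
    fix t assume t1: "1 \<le> t" and tL: "t < L" and tz: "t \<le> Z \<or> L - Z \<le> t"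
    have "aacorr g (int t) + aacorr h (int t) = coeff (Poly g * Poly (rev (map cnj g))) (L-1-t) + coeff (Poly h * Poly (rev (map cnj h))) (L-1-t)"
      using acorr_coeff[of g L g t] acorr_coeff[of h L h t] lg tL by (simp add: L_def)
    also have "\<dots> = (if L-1-t < 1 then 0 else x0 * (coeff (B - A) (L-1-t-1) + coeff (B - A) (L-1-t-1)))"
      using autoC[of "L-1-t"] t1 tL by (simp add: L_def K_def)
    also have "\<dots> = 0"
    proof -
      have "L-1-t-1 < N div 2 \<or> N \<le> L-1-t-1" using tz N2 t1 tL by (auto simp: L_def Z_def)
      then show ?thesis using zBA by simp
    qed
    finally show "aacorr g (int t) + aacorr h (int t) = 0" .
  qed
  have crossP: "\<And>t. L - Z \<le> t \<Longrightarrow> t < L \<Longrightarrow> acorr g h (int t) + acorr h g (int t) = 0"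
  proof -
    fix t assume tz: "L - Z \<le> t" and tL: "t < L"
    have "acorr g h (int t) + acorr h g (int t) = coeff (Poly g * Poly (rev (map cnj h))) (L-1-t) + coeff (Poly h * Poly (rev (map cnj g))) (L-1-t)"
      using acorr_coeff[of g L h t] acorr_coeff[of h L g t] lg tL by (simp add: L_def)
    also have "\<dots> = 0"
      using crossC[of "L-1-t"] tz tL N2 by (simp add: L_def K_def Z_def)
    finally show "acorr g h (int t) + acorr h g (int t) = 0" .
  qed
  have Lz: "2 * N + 2 - (N div 2 + 1) \<ge> 1" by simp
  show ?thesis unfolding CZCP_def
  proof (intro conjI allI impI)
    show "length g = 2 * N + 2" "length h = 2 * N + 2" using lg by auto
  next
    fix tau :: int assume tm: "nat \<bar>tau\<bar> \<in> {1..N div 2 + 1} \<union> {2 * N + 2 - (N div 2 + 1)..2 * N + 2 - 1}"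
    define t where "t = nat \<bar>tau\<bar>"
    have ht: "1 \<le> t" "t < L" "t \<le> Z \<or> L - Z \<le> t" using tm Lz by (auto simp: t_def L_def Z_def)
    have z: "aacorr g (int t) + aacorr h (int t) = 0" using autoP[OF ht] .
    show "aacorr g tau + aacorr h tau = 0"
    proof (cases "tau \<ge> 0")
      case True then have "tau = int t" by (simp add: t_def)
      then show ?thesis using z by simp
    next
      case False then have "tau = - int t" by (simp add: t_def)
      then show ?thesis using z acorr_neg[of g g t] acorr_neg[of h h t]
        by (metis complex_cnj_add complex_cnj_zero)
    qed
  next
    fix tau :: int assume tm: "nat \<bar>tau\<bar> \<in> {2 * N + 2 - (N div 2 + 1)..2 * N + 2 - 1}"
    define t where "t = nat \<bar>tau\<bar>"
    have ht: "L - Z \<le> t" "t < L" using tm by (auto simp: t_def L_def Z_def)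
    have z: "acorr g h (int t) + acorr h g (int t) = 0" using crossP[OF ht] .
    show "acorr g h tau + acorr h g tau = 0"
    proof (cases "tau \<ge> 0")
      case True then have "tau = int t" by (simp add: t_def)
      then show ?thesis using z by simp
    next
      case False then have "tau = - int t" by (simp add: t_def)
      then show ?thesis using z acorr_neg[of g h t] acorr_neg[of h g t] lg
        by (metis add.commute complex_cnj_add complex_cnj_zero)
    qed
  qed
qed

end
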